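(* Let $\Sigma$ be a finite alphabet with $|\Sigma|\ge 2$, let $m,n$ be positive integers with $m\ge 2$, and let $\rho,\rho_1,\rho_2,\rho_3$ be real numbers with $0<\rho<1$, $\rho_1>0$, $\rho_2>0$, $\rho_3>0$ and $\rho_1+\rho_2+\rho_3\le 1$. Then the Markov chains with transition matrices $S^{\mathfrak{N}(n)}_{\rho_1,\rho_2,\rho_3}$, $S^{\mathfrak{N}_m(n)}_{\rho_1,\rho_2,\rho_3}$ and $S^{\mathfrak{N}'_m(n)}_{\rho_1,\rho_2,\rho_3}$ are aperiodic, and so are the Markov chains with transition matrices $S^{\mathfrak{N}(n)^\bullet}_{\rho}$, $S^{\mathfrak{N}_m(n)^\bullet}_{\rho}$ and $S^{\mathfrak{N}'_m(n)^\bullet}_{\rho}$.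
   Context: A non-deterministic automaton (NFA) over $\Sigma$ is a tuple $(Q,\Sigma,\Delta,I,F)$ with $Q$ a finite set of states, $\Delta\subseteq Q\times\Sigma\times Q$ the transitions, $I\subseteq Q$ the initial states and $F\subseteq Q$ the final states. A path is a sequence of transitions $(p_0,a_0,q_0)\cdots(p_k,a_k,q_k)$ with $q_i=p_{i+1}$. The NFA is accessible if every state is reachable by a path from an initial state, co-accessible if from every state a final state is reachable by a path, and trim if both. $\mathfrak{N}(n)$ is the set of trim NFAs over $\Sigma$ with state set $Q=\{1,\dots,n\}$. $\mathfrak{N}_m(n)$ is the set of automata in $\mathfrak{N}(n)$ such that for each state $p$ there are at most $m$ pairs $(a,q)$ with $(p,a,q)\in\Delta$. $\mathfrak{N}'_m(n)$ is the set of automata in $\mathfrak{N}(n)$ such that for each state $p$ and each letter $a$ there are at most $m$ states $q$ with $(p,a,q)\in\Delta$. For a class $\mathfrak{X}$, $\mathfrak{X}^\bullet$ is the subclass of automata whose set of initial states is exactly $\{1\}$. For an automaton $\mathcal{A}=(Q,\Sigma,\Delta,I,F)$: $\mathsf{Ch_{init}}(\mathcal{A},q)$ is $\mathcal{A}$ with $q$ removed from $I$ if $q\in I$ and added to $I$ otherwise; $\mathsf{Ch_{final}}(\mathcal{A},q)$ is defined similarly with $F$; $\mathsf{Ch_{trans}}(\mathcal{A},(p,a,q))$ is $\mathcal{A}$ with $(p,a,q)$ removed from $\Delta$ if present and added otherwise. For a class $\mathfrak{X}$ of automata with state set $Q=\{1,\dots,n\}$ and reals $\rho_i\in[0,1]$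 with $\rho_1+\rho_2+\rho_3\le1$, the matrix $S^{\mathfrak{X}}_{\rho_1,\rho_2,\rho_3}$ on $\mathfrak{X}\times\mathfrak{X}$ is: for $x\ne y$, $S(x,y)=\rho_1/n$ if $y=\mathsf{Ch_{init}}(x,q)$ for some $q$; $S(x,y)=\rho_2/n$ if $y=\mathsf{Ch_{final}}(x,q)$ for some $q$; $S(x,y)=\rho_3/(|\Sigma|n^2)$ if $y=\mathsf{Ch_{trans}}(x,(p,a,q))$ for some $(p,a,q)\in Q\times\Sigma\times Q$; $S(x,y)=0$ otherwise; and $S(x,x)=1-\sum_{y\ne x}S(x,y)$. For $\mathfrak{X}\in\{\mathfrak{N}(n),\mathfrak{N}_m(n),\mathfrak{N}'_m(n)\}$ and $0<\rho<1$, $S^{\mathfrak{X}^\bullet}_\rho$ is the matrix $S^{\mathfrak{X}^\bullet}_{0,\rho,1-\rho}$ defined by the same rules on the class $\mathfrak{X}^\bullet$. A Markov chain is aperiodic if for every state $x$ the gcd of the lengths of all cycles through $x$ in the graph of nonzero transition probabilities is $1$. *)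

theory Defs
  imports Complex_Main
begin

text \<open>NFAs over the alphabet given by the finite type 'a, with states natural numbers;
  the state set is Q = {1..n}.\<close>

record 'a nfa =
  trans :: "(nat \<times> 'a \<times> nat) set"
  init  :: "nat set"
  fin   :: "nat set"

definition states :: "nat \<Rightarrow> nat set" where
  "states n = {1..n}"

definition well_formed :: "nat \<Rightarrow> 'a nfa \<Rightarrow> bool" where
  "well_formed n A \<longleftrightarrow> trans A \<subseteq> states n \<times> UNIV \<times> states n
      \<and> init A \<subseteq> states n \<and> fin A \<subseteq> states n"

definition step_rel :: "'a nfa \<Rightarrow> (nat \<times> nat) set" where
  "step_rel A = {(p, q). \<exists>a. (p, a, q) \<in> trans A}"

definition accessible :: "nat \<Rightarrow> 'a nfa \<Rightarrow> bool" where
  "accessible n A \<longleftrightarrow> (\<forall>q\<in>states n. \<exists>i\<in>init A. (i, q) \<in> (step_rel A)\<^sup>*)"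

definition coaccessible :: "nat \<Rightarrow> 'a nfa \<Rightarrow> bool" where
  "coaccessible n A \<longleftrightarrow> (\<forall>q\<in>states n. \<exists>f\<in>fin A. (q, f) \<in> (step_rel A)\<^sup>*)"

definition trim :: "nat \<Rightarrow> 'a nfa \<Rightarrow> bool" where
  "trim n A \<longleftrightarrow> accessible n A \<and> coaccessible n A"

definition NFA_trim :: "nat \<Rightarrow> 'a nfa set" where
  "NFA_trim n = {A. well_formed n A \<and> trim n A}"

definition NFA_m :: "nat \<Rightarrow> nat \<Rightarrow> 'a nfa set" where
  "NFA_m m n = {A \<in> NFA_trim n. \<forall>p. card {(a, q). (p, a, q) \<in> trans A} \<le> m}"

definition NFA'_m :: "nat \<Rightarrow> nat \<Rightarrow> 'a nfa set" where
  "NFA'_m m n = {A \<in> NFA_trim n. \<forall>p a. card {q. (p, a, q) \<in> trans A} \<le> m}"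

definition bullet :: "'a nfa set \<Rightarrow> 'a nfa set" where
  "bullet X = {A \<in> X. init A = {1}}"

definition toggle :: "'b \<Rightarrow> 'b set \<Rightarrow> 'b set" where
  "toggle x S = (if x \<in> S then S - {x} else insert x S)"

definition Ch_init :: "'a nfa \<Rightarrow> nat \<Rightarrow> 'a nfa" where
  "Ch_init A q = A\<lparr>init := toggle q (init A)\<rparr>"

definition Ch_final :: "'a nfa \<Rightarrow> nat \<Rightarrow> 'a nfa" where
  "Ch_final A q = A\<lparr>fin := toggle q (fin A)\<rparr>"

definition Ch_trans :: "'a nfa \<Rightarrow> nat \<times> 'a \<times> nat \<Rightarrow> 'a nfa" where
  "Ch_trans A t = A\<lparr>trans := toggle t (trans A)\<rparr>"

definition S_off :: "nat \<Rightarrow> real \<Rightarrow> real \<Rightarrow> real \<Rightarrow> 'a nfa \<Rightarrow> 'a nfa \<Rightarrow> real" where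
  "S_off n r1 r2 r3 x y =
     (if \<exists>q\<in>states n. y = Ch_init x q then r1 / real n
      else if \<exists>q\<in>states n. y = Ch_final x q then r2 / real n
      else if \<exists>t\<in>states n \<times> UNIV \<times> states n. y = Ch_trans x t
        then r3 / (real (card (UNIV :: 'a set)) * real n ^ 2)
      else 0)"

text \<open>The matrix S^X_{r1,r2,r3} on X \<times> X (values outside X \<times> X are irrelevant).\<close>
definition S_mat :: "'a nfa set \<Rightarrow> nat \<Rightarrow> real \<Rightarrow> real \<Rightarrow> real \<Rightarrow> 'a nfa \<Rightarrow> 'a nfa \<Rightarrow> real" where
  "S_mat X n r1 r2 r3 x y =
     (if x = y then 1 - (\<Sum>z\<in>X - {x}. S_off n r1 r2 r3 x z)
      else S_off n r1 r2 r3 x y)"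

definition chain_graph :: "'s set \<Rightarrow> ('s \<Rightarrow> 's \<Rightarrow> real) \<Rightarrow> ('s \<times> 's) set" where
  "chain_graph X P = {(x, y). x \<in> X \<and> y \<in> X \<and> P x y \<noteq> 0}"

definition aperiodic :: "'s set \<Rightarrow> ('s \<Rightarrow> 's \<Rightarrow> real) \<Rightarrow> bool" where
  "aperiodic X P \<longleftrightarrow>
     (\<forall>x\<in>X. Gcd {k::nat. k > 0 \<and> (x, x) \<in> (chain_graph X P) ^^ k} = 1)"

end

theory Submission
  imports Defs
begin

lemma toggle_neq: "toggle a S \<noteq> S"
  unfolding toggle_def by auto

lemma toggle_toggle: "toggle a (toggle a S) = S"
  unfolding toggle_def by auto

lemma card_states: "card (states n) = n" unfolding states_def by simp

lemma finite_states: "finite (states n)" unfolding states_def by simp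

lemma fin_props:
  assumes "x \<in> NFA_trim n" "n \<ge> 1"
  shows "fin x \<noteq> {}" "finite (fin x)" "fin x \<subseteq> states n"
proof -
  have wf: "well_formed n x" and co: "coaccessible n x"
    using assms unfolding NFA_trim_def trim_def by auto
  show "fin x \<subseteq> states n" using wf unfolding well_formed_def by auto
  then show "finite (fin x)" using finite_states finite_subset by blast
  have "1 \<in> states n" using assms(2) unfolding states_def by auto
  then show "fin x \<noteq> {}" using co unfolding coaccessible_def by auto
qed

lemma sum_bound:
  fixes x :: "'a::finite nfa"
  assumes n: "n \<ge> 1" and r: "r1 \<ge> 0" "r2 > 0" "r3 \<ge> 0" "r1 + r2 + r3 \<le> 1"
    and f: "f \<in> states n" and out: "Ch_final x f \<notin> Y" and fy: "finite Y"
  shows "(\<Sum>z\<in>Y. S_off n r1 r2 r3 x z) < 1"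
proof -
  define A where "A = (\<lambda>q. Ch_init x q) ` states n"
  define B where "B = (\<lambda>q. Ch_final x q) ` states n"
  define C where "C = (\<lambda>t. Ch_trans x t) ` (states n \<times> (UNIV::'a set) \<times> states n)"
  define a where "a = r1 / real n"
  define b where "b = r2 / real n"
  define c where "c = r3 / (real (card (UNIV :: 'a set)) * real n ^ 2)"
  have a0: "a \<ge> 0" "b \<ge> 0" "c \<ge> 0" using r unfolding a_def b_def c_def by auto
  have pt: "S_off n r1 r2 r3 x z \<le> (if z \<in> A then a else 0) + (if z \<in> B then b else 0)
      + (if z \<in> C then c else 0)" for z
    using a0 by (auto simp add: S_off_def A_def B_def C_def a_def b_def c_def)
  have "(\<Sum>z\<in>Y. S_off n r1 r2 r3 x z) \<le> (\<Sum>z\<in>Y. (if z \<in> A then a else 0) + (if z \<in> B then b else 0)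
      + (if z \<in> C then c else 0))"
    by (rule sum_mono) (rule pt)
  also have "\<dots> = a * card (Y \<inter> A) + b * card (Y \<inter> B) + c * card (Y \<inter> C)"
    using fy by (simp add: sum.distrib sum.If_cases Int_def)
  finally have s: "(\<Sum>z\<in>Y. S_off n r1 r2 r3 x z) \<le> a * card (Y \<inter> A) + b * card (Y \<inter> B) + c * card (Y \<inter> C)" .
  have fA: "finite A" "finite B" "finite C" unfolding A_def B_def C_def using finite_states by auto
  have cA: "card (Y \<inter> A) \<le> n"
    using card_mono[OF fA(1), of "Y \<inter> A"] card_image_le[OF finite_states, of "\<lambda>q. Ch_init x q" n]
    unfolding A_def card_states by auto
  have inB: "Ch_final x f \<in> B" using f unfolding B_def by auto
  have cB0: "card B \<le> n" using card_image_le[OF finite_states, of "\<lambda>q. Ch_final x q" n]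
    unfolding B_def card_states by auto
  have "card (Y \<inter> B) \<le> card (B - {Ch_final x f})"
    by (rule card_mono) (use fA out in auto)
  also have "\<dots> = card B - 1" using inB fA by simp
  finally have cB: "card (Y \<inter> B) \<le> n - 1" using cB0 by linarith
  have "card (Y \<inter> C) \<le> card C" by (rule card_mono) (use fA in auto)
  also have "\<dots> \<le> card (states n \<times> (UNIV::'a set) \<times> states n)"
    unfolding C_def by (rule card_image_le) (simp add: finite_states)
  also have "\<dots> = n * (card (UNIV::'a set) * n)" by (simp add: card_cartesian_product card_states)
  finally have cC: "card (Y \<inter> C) \<le> n * (card (UNIV::'a set) * n)" .
  have np: "real n > 0" using n by simp
  have up: "real (card (UNIV::'a set)) > 0" by (simp add: finite_UNIV_card_ge_0)
  have "a * card (Y \<inter> A) \<le> a * n" using cA a0 by (simp add: mult_left_mono)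
  also have "a * n = r1" unfolding a_def using np by simp
  finally have t1: "a * card (Y \<inter> A) \<le> r1" .
  have "b * card (Y \<inter> B) \<le> b * real (n - 1)" using cB a0 by (simp add: mult_left_mono)
  also have "\<dots> = r2 - r2 / real n" unfolding b_def using np n by (simp add: of_nat_diff field_simps)
  finally have t2: "b * card (Y \<inter> B) \<le> r2 - r2 / real n" .
  have "c * card (Y \<inter> C) \<le> c * real (n * (card (UNIV::'a set) * n))"
  proof -
    have "real (card (Y \<inter> C)) \<le> real (n * (card (UNIV::'a set) * n))" using cC by (simp only: of_nat_le_iff)
    then show ?thesis using a0(3) by (rule mult_left_mono)
  qed
  also have "\<dots> = r3" unfolding c_def using np up by (simp add: field_simps power2_eq_square)
  finally have t3: "c * card (Y \<inter> C) \<le> r3" .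
  have "r2 / real n > 0" using r np by simp
  then show ?thesis using s t1 t2 t3 r by linarith
qed

lemma main:
  fixes X :: "'a::finite nfa set"
  assumes sub: "X \<subseteq> NFA_trim n" and n: "n \<ge> 1"
    and r: "r1 \<ge> 0" "r2 > 0" "r3 \<ge> 0" "r1 + r2 + r3 \<le> 1"
  shows "aperiodic X (S_mat X n r1 r2 r3)"
proof -
  let ?G = "chain_graph X (S_mat X n r1 r2 r3)"
  have loop: "(x,x) \<in> ?G" if "x \<in> X" "f \<in> fin x" "Ch_final x f \<notin> X" for x f
  proof -
    have fs: "f \<in> states n" using fin_props(3)[OF _ n] sub that by blast
    have "(\<Sum>z\<in>X - {x}. S_off n r1 r2 r3 x z) < 1"
    proof (cases "finite (X - {x})")
      case True then show ?thesis using sum_bound[OF n r fs, of x "X - {x}"] that(3) by auto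
    next
      case False then show ?thesis by simp
    qed
    then show ?thesis using that(1) unfolding chain_graph_def S_mat_def by auto
  qed
  have edge: "(x, Ch_final x f) \<in> ?G \<and> (Ch_final x f, x) \<in> ?G"
    if "x \<in> X" "f \<in> fin x" "Ch_final x f \<in> X" for x f
  proof -
    have fs: "f \<in> states n" using fin_props(3)[OF _ n] sub that by blast
    let ?y = "Ch_final x f"
    have ff: "fin ?y = toggle f (fin x)" by (simp add: Ch_final_def)
    have ne: "?y \<noteq> x" using ff toggle_neq by metis
    have bk: "Ch_final ?y f = x" by (simp add: Ch_final_def toggle_toggle)
    have ni1: "\<not>(\<exists>q\<in>states n. ?y = Ch_init x q)"
    proof
      assume "\<exists>q\<in>states n. ?y = Ch_init x q"
      then obtain q where "?y = Ch_init x q" by blast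
      then have "fin ?y = fin x" by (simp add: Ch_init_def)
      then show False using ff toggle_neq by metis
    qed
    have ni2: "\<not>(\<exists>q\<in>states n. x = Ch_init ?y q)"
    proof
      assume "\<exists>q\<in>states n. x = Ch_init ?y q"
      then obtain q where "x = Ch_init ?y q" by blast
      then have "fin x = fin (Ch_init ?y q)" by (rule arg_cong)
      then have "fin ?y = fin x" by (simp add: Ch_init_def)
      then show False using ff toggle_neq by metis
    qed
    have "S_mat X n r1 r2 r3 x ?y = r2 / real n"
      using ne ni1 fs unfolding S_mat_def S_off_def by auto
    moreover have "S_mat X n r1 r2 r3 ?y x = r2 / real n"
      using ne ni2 fs bk unfolding S_mat_def S_off_def by force
    moreover have "r2 / real n \<noteq> 0" using r n by simp
    ultimately show ?thesis using that unfolding chain_graph_def by auto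
  qed
  have claim: "\<exists>k. (x,x) \<in> ?G ^^ (2*k+1) \<and> (k > 0 \<longrightarrow> (x,x) \<in> ?G ^^ 2)" if "x \<in> X" for x
    using that
  proof (induction "card (fin x)" arbitrary: x rule: less_induct)
    case less
    have fp: "fin x \<noteq> {}" "finite (fin x)" using fin_props[OF _ n] sub less.prems by blast+
    then obtain f where f: "f \<in> fin x" by blast
    show ?case
    proof (cases "Ch_final x f \<in> X")
      case False
      then have "(x,x) \<in> ?G" using loop less.prems f by blast
      then show ?thesis by (intro exI[of _ 0]) auto
    next
      case True
      let ?y = "Ch_final x f"
      have "fin ?y = fin x - {f}" using f by (simp add: Ch_final_def toggle_def)
      then have "card (fin ?y) < card (fin x)" using f fp by (metis card_Diff1_less)
      then obtain k where k: "(?y,?y) \<in> ?G ^^ (2*k+1)" using less.hyps True by blast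
      have e: "(x, ?y) \<in> ?G" "(?y, x) \<in> ?G" using edge less.prems f True by blast+
      have "(x, ?y) \<in> ?G ^^ (Suc (2*k+1))" by (rule relpow_Suc_I2[OF e(1) k])
      then have "(x, x) \<in> ?G ^^ (Suc (Suc (2*k+1)))" by (rule relpow_Suc_I[OF _ e(2)])
      then have c1: "(x, x) \<in> ?G ^^ (2*Suc k+1)" by simp
      have "(?y, x) \<in> ?G ^^ 1" using e(2) by simp
      then have "(x, x) \<in> ?G ^^ (Suc 1)" by (rule relpow_Suc_I2[OF e(1)])
      then have c2: "(x, x) \<in> ?G ^^ 2" by (simp only: numeral_2_eq_2 One_nat_def)
      show ?thesis using c1 c2 by blast
    qed
  qed
  show ?thesis unfolding aperiodic_def
  proof
    fix x assume "x \<in> X"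
    from claim[OF this] obtain k where k: "(x,x) \<in> ?G ^^ (2*k+1)" "k > 0 \<longrightarrow> (x,x) \<in> ?G ^^ 2"
      by blast
    let ?S = "{k::nat. k>0 \<and> (x,x) \<in> ?G^^k}"
    have d1: "Gcd ?S dvd 2*k+1" by (rule Gcd_dvd) (use k in auto)
    show "Gcd ?S = 1"
    proof (cases "k = 0")
      case True then show ?thesis using d1 by simp
    next
      case False
      then have "Gcd ?S dvd 2" by (intro Gcd_dvd) (use k in auto)
      then have "Gcd ?S dvd 2*k" by (rule dvd_mult2)
      then have "Gcd ?S dvd (2*k+1) - 2*k" using d1 by (rule dvd_diff_nat[rotated])
      then show ?thesis by simp
    qed
  qed
qed

theorem lemma2:
  fixes m n :: nat and \<rho> \<rho>1 \<rho>2 \<rho>3 :: real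
  assumes "card (UNIV :: 'a::finite set) \<ge> 2"
    and "m \<ge> 2" and "n \<ge> 1"
    and "0 < \<rho>" and "\<rho> < 1"
    and "\<rho>1 > 0" and "\<rho>2 > 0" and "\<rho>3 > 0" and "\<rho>1 + \<rho>2 + \<rho>3 \<le> 1"
  shows "aperiodic (NFA_trim n :: 'a nfa set) (S_mat (NFA_trim n) n \<rho>1 \<rho>2 \<rho>3)
       \<and> aperiodic (NFA_m m n :: 'a nfa set) (S_mat (NFA_m m n) n \<rho>1 \<rho>2 \<rho>3)
       \<and> aperiodic (NFA'_m m n :: 'a nfa set) (S_mat (NFA'_m m n) n \<rho>1 \<rho>2 \<rho>3)
       \<and> aperiodic (bullet (NFA_trim n) :: 'a nfa set)
           (S_mat (bullet (NFA_trim n)) n 0 \<rho> (1 - \<rho>))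
       \<and> aperiodic (bullet (NFA_m m n) :: 'a nfa set)
           (S_mat (bullet (NFA_m m n)) n 0 \<rho> (1 - \<rho>))
       \<and> aperiodic (bullet (NFA'_m m n) :: 'a nfa set)
           (S_mat (bullet (NFA'_m m n)) n 0 \<rho> (1 - \<rho>))"
proof -
  have s1: "NFA_m m n \<subseteq> NFA_trim n" "NFA'_m m n \<subseteq> NFA_trim n"
    unfolding NFA_m_def NFA'_m_def by auto
  have sb: "bullet X \<subseteq> X" for X :: "'a nfa set" unfolding bullet_def by auto
  have r1: "\<rho>1 \<ge> 0" "\<rho>3 \<ge> 0" using assms by auto
  have r2: "(0::real) \<ge> 0" "1 - \<rho> \<ge> 0" "0 + \<rho> + (1 - \<rho>) \<le> 1" using assms by auto
  show ?thesis
    using main[OF order_refl assms(3) r1(1) assms(7) r1(2) assms(9)]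
      main[OF s1(1) assms(3) r1(1) assms(7) r1(2) assms(9)]
      main[OF s1(2) assms(3) r1(1) assms(7) r1(2) assms(9)]
      main[OF sb assms(3) r2(1) assms(4) r2(2) r2(3)]
      main[OF order_trans[OF sb s1(1)] assms(3) r2(1) assms(4) r2(2) r2(3)]
      main[OF order_trans[OF sb s1(2)] assms(3) r2(1) assms(4) r2(2) r2(3)]
    by blast
qed

end
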